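(* Let $\mathbf{\Omega}\subset\mathbb{R}^n$ be a finite set, let $f:\mathbf{\Omega}\to\mathbb{R}$, and let $\lambda=\sum_{\mathbf{v}\in\mathbf{\Omega}}\delta_{\mathbf{v}}$ be the counting measure on $\mathbf{\Omega}$. Let $\underline{f}=\min_{\mathbf{\Omega}}f$, $\overline{f}=\max_{\mathbf{\Omega}}f$, $\mathcal{Z}=\{f(\mathbf{v}):\mathbf{v}\in\mathbf{\Omega}\}$ and $\bar r=\mathrm{card}(\mathcal{Z})-1$. Let $\#\lambda$ be the pushforward of $\lambda$ by $f$, with moments $\#\lambda_k=\sum_{\mathbf{v}\in\mathbf{\Omega}}f(\mathbf{v})^k$, and for $r\in\mathbb{N}$ let $\mathbf{H}_r(\#\lambda)$ and $\mathbf{H}_r(x;\#\lambda)$ be the $(r+1)\times(r+1)$ Hankel matrices with $(i,j)$ entries $\#\lambda_{i+j}$ and $\#\lambda_{i+j+1}$ respectively ($i,j=0,\dots,r$), and \[\tau^\ell_r=\sup_a\{a:\ \mathbf{H}_r(x;\#\lambda)\succeq a\,\mathbf{H}_r(\#\lambda)\},\qquad \tau^u_r=\inf_a\{a:\ a\,\mathbf{H}_r(\#\lambda)\succeq \mathbf{H}_r(x;\#\lambda)\}.\] Then $\tau^\ell_{\bar r}=\underline{f}$ and $\tau^u_{\bar r}=\overline{f}$.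
   Context: $\delta_{\mathbf{v}}$ is the Dirac measure at $\mathbf{v}$. The pushforward is $\#\lambda(C)=\lambda(f^{-1}(C))$. $\mathbf{A}\succeq\mathbf{B}$ means $\mathbf{A}-\mathbf{B}$ is positive semidefinite. *)

theory Defs
  imports "HOL-Analysis.Analysis"
begin

definition push_moment :: "('a \<Rightarrow> real) \<Rightarrow> 'a set \<Rightarrow> nat \<Rightarrow> real" where
  "push_moment f \<Omega> k = (\<Sum>v\<in>\<Omega>. f v ^ k)"

text \<open>Hankel matrices H_r(#lambda) and H_r(x;#lambda), entries indexed by i,j = 0..r
  (represented as functions nat => nat => real, only entries i,j <= r matter).\<close>
definition hankel :: "(nat \<Rightarrow> real) \<Rightarrow> nat \<Rightarrow> nat \<Rightarrow> real" where
  "hankel m i j = m (i + j)"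

definition hankel_x :: "(nat \<Rightarrow> real) \<Rightarrow> nat \<Rightarrow> nat \<Rightarrow> real" where
  "hankel_x m i j = m (i + j + 1)"

definition psd_mat :: "nat \<Rightarrow> (nat \<Rightarrow> nat \<Rightarrow> real) \<Rightarrow> bool" where
  "psd_mat r M \<longleftrightarrow> (\<forall>x :: nat \<Rightarrow> real. 0 \<le> (\<Sum>i\<le>r. \<Sum>j\<le>r. x i * M i j * x j))"

definition tau_l :: "(nat \<Rightarrow> real) \<Rightarrow> nat \<Rightarrow> real" where
  "tau_l m r = Sup {a. psd_mat r (\<lambda>i j. hankel_x m i j - a * hankel m i j)}"

definition tau_u :: "(nat \<Rightarrow> real) \<Rightarrow> nat \<Rightarrow> real" where
  "tau_u m r = Inf {a. psd_mat r (\<lambda>i j. a * hankel m i j - hankel_x m i j)}"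

end

theory Submission
  imports Defs "HOL-Computational_Algebra.Polynomial"
begin

lemma quad_id:
  fixes g h :: "'a \<Rightarrow> real"
  shows "(\<Sum>i\<le>r. \<Sum>j\<le>r. x i * (\<Sum>v\<in>\<Omega>. g v * h v ^ (i+j)) * x j)
       = (\<Sum>v\<in>\<Omega>. g v * (\<Sum>i\<le>r. x i * h v ^ i)^2)"
proof -
  have "(\<Sum>i\<le>r. \<Sum>j\<le>r. x i * (\<Sum>v\<in>\<Omega>. g v * h v ^ (i+j)) * x j)
      = (\<Sum>i\<le>r. \<Sum>j\<le>r. \<Sum>v\<in>\<Omega>. g v * ((x i * h v ^ i) * (x j * h v ^ j)))"
    by (simp add: sum_distrib_left sum_distrib_right power_add mult_ac)
  also have "\<dots> = (\<Sum>v\<in>\<Omega>. \<Sum>i\<le>r. \<Sum>j\<le>r. g v * ((x i * h v ^ i) * (x j * h v ^ j)))"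
    by (simp add: sum.swap[of _ \<Omega>])
  also have "\<dots> = (\<Sum>v\<in>\<Omega>. g v * (\<Sum>i\<le>r. x i * h v ^ i)^2)"
  proof (intro sum.cong refl)
    fix v
    have "(\<Sum>i\<le>r. x i * h v ^ i)^2 = (\<Sum>i\<le>r. \<Sum>j\<le>r. (x i * h v ^ i) * (x j * h v ^ j))"
      unfolding power2_eq_square sum_product ..
    then show "(\<Sum>i\<le>r. \<Sum>j\<le>r. g v * ((x i * h v ^ i) * (x j * h v ^ j))) = g v * (\<Sum>i\<le>r. x i * h v ^ i)^2"
      by (simp add: sum_distrib_left)
  qed
  finally show ?thesis .
qed

lemma neg_witness:
  fixes f :: "'a \<Rightarrow> real"
  assumes fin: "finite \<Omega>" and zz: "zz \<in> f ` \<Omega>"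
    and neg: "\<And>v. v \<in> \<Omega> \<Longrightarrow> f v = zz \<Longrightarrow> g v < 0"
  shows "\<exists>x. (\<Sum>v\<in>\<Omega>. g v * (\<Sum>i\<le>card (f ` \<Omega>) - 1. x i * f v ^ i)^2) < 0"
proof -
  define p where "p = (\<Prod>z\<in>f ` \<Omega> - {zz}. [:-z, 1:])"
  have finZ: "finite (f ` \<Omega> - {zz})" using fin by simp
  have dp: "degree p = card (f ` \<Omega>) - 1"
    unfolding p_def using finZ zz fin
    by (subst degree_prod_eq_sum_degree) (auto simp: card_Diff_singleton)
  have pv: "poly p t = (\<Sum>i\<le>card (f ` \<Omega>) - 1. coeff p i * t ^ i)" for t
    using dp by (simp add: poly_altdef)
  have p0: "poly p z = 0" if "z \<in> f ` \<Omega>" "z \<noteq> zz" for z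
    unfolding p_def poly_prod using finZ that
    by (intro prod_zero) auto
  have p1: "poly p zz \<noteq> 0"
    unfolding p_def poly_prod using finZ by (auto)
  obtain v0 where v0: "v0 \<in> \<Omega>" "f v0 = zz" using zz by auto
  have le: "g v * (poly p (f v))^2 \<le> 0" if "v \<in> \<Omega>" for v
  proof (cases "f v = zz")
    case True then show ?thesis using neg[OF that] by (simp add: mult_nonneg_nonpos2 mult_nonpos_nonneg)
  next
    case False then show ?thesis using p0[of "f v"] that by simp
  qed
  have lt: "g v0 * (poly p (f v0))^2 < 0"
    using neg[OF v0] p1 v0 by (simp add: mult_neg_pos)
  have "(\<Sum>v\<in>\<Omega>. g v * (poly p (f v))^2) < 0"
  proof -
    have "(\<Sum>v\<in>\<Omega>. g v * (poly p (f v))^2) = g v0 * (poly p (f v0))^2 + (\<Sum>v\<in>\<Omega>-{v0}. g v * (poly p (f v))^2)"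
      using fin v0 by (simp add: sum.remove)
    moreover have "(\<Sum>v\<in>\<Omega>-{v0}. g v * (poly p (f v))^2) \<le> 0"
      using le by (intro sum_nonpos) auto
    ultimately show ?thesis using lt by linarith
  qed
  then show ?thesis using pv by (intro exI[of _ "coeff p"]) simp
qed

theorem lemma2p4:
  fixes \<Omega> :: "(real ^ 'n) set" and f :: "real ^ 'n \<Rightarrow> real"
  assumes "finite \<Omega>" and "\<Omega> \<noteq> {}"
  shows "tau_l (push_moment f \<Omega>) (card (f ` \<Omega>) - 1) = Min (f ` \<Omega>)
    \<and> tau_u (push_moment f \<Omega>) (card (f ` \<Omega>) - 1) = Max (f ` \<Omega>)"
proof -
  let ?r = "card (f ` \<Omega>) - 1"
  let ?m = "push_moment f \<Omega>"
  have finZ: "finite (f ` \<Omega>)" and neZ: "f ` \<Omega> \<noteq> {}" using assms by auto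
  have e1: "(\<lambda>i j. hankel_x ?m i j - a * hankel ?m i j) = (\<lambda>i j. \<Sum>v\<in>\<Omega>. (f v - a) * f v ^ (i+j))" for a
    by (auto simp: hankel_x_def hankel_def push_moment_def sum_distrib_left sum_subtractf[symmetric] algebra_simps intro!: ext sum.cong)
  have e2: "(\<lambda>i j. a * hankel ?m i j - hankel_x ?m i j) = (\<lambda>i j. \<Sum>v\<in>\<Omega>. (a - f v) * f v ^ (i+j))" for a
    by (auto simp: hankel_x_def hankel_def push_moment_def sum_distrib_left sum_subtractf[symmetric] algebra_simps intro!: ext sum.cong)
  have S1: "{a. psd_mat ?r (\<lambda>i j. hankel_x ?m i j - a * hankel ?m i j)} = {..Min (f ` \<Omega>)}"
  proof (intro set_eqI iffI)
    fix a assume "a \<in> {a. psd_mat ?r (\<lambda>i j. hankel_x ?m i j - a * hankel ?m i j)}"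
    then have H: "\<forall>x. 0 \<le> (\<Sum>v\<in>\<Omega>. (f v - a) * (\<Sum>i\<le>?r. x i * f v ^ i)^2)"
      unfolding e1 psd_mat_def quad_id by simp
    show "a \<in> {..Min (f ` \<Omega>)}"
    proof (rule ccontr)
      assume "a \<notin> {..Min (f ` \<Omega>)}"
      then have "Min (f ` \<Omega>) - a < 0" by simp
      moreover have "Min (f ` \<Omega>) \<in> f ` \<Omega>" using finZ neZ by simp
      ultimately obtain x where "(\<Sum>v\<in>\<Omega>. (f v - a) * (\<Sum>i\<le>?r. x i * f v ^ i)^2) < 0"
        using neg_witness[OF assms(1), where zz="Min (f ` \<Omega>)" and f=f and g="\<lambda>v. f v - a"] by auto
      with H show False by (meson not_le)
    qed
  next
    fix a assume "a \<in> {..Min (f ` \<Omega>)}"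
    then have "a \<le> f v" if "v \<in> \<Omega>" for v using finZ that by (auto intro: order_trans[OF _ Min_le])
    then show "a \<in> {a. psd_mat ?r (\<lambda>i j. hankel_x ?m i j - a * hankel ?m i j)}"
      unfolding e1 psd_mat_def quad_id by (auto intro!: sum_nonneg)
  qed
  have S2: "{a. psd_mat ?r (\<lambda>i j. a * hankel ?m i j - hankel_x ?m i j)} = {Max (f ` \<Omega>)..}"
  proof (intro set_eqI iffI)
    fix a assume "a \<in> {a. psd_mat ?r (\<lambda>i j. a * hankel ?m i j - hankel_x ?m i j)}"
    then have H: "\<forall>x. 0 \<le> (\<Sum>v\<in>\<Omega>. (a - f v) * (\<Sum>i\<le>?r. x i * f v ^ i)^2)"
      unfolding e2 psd_mat_def quad_id by simp
    show "a \<in> {Max (f ` \<Omega>)..}"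
    proof (rule ccontr)
      assume "a \<notin> {Max (f ` \<Omega>)..}"
      then have "a - Max (f ` \<Omega>) < 0" by simp
      moreover have "Max (f ` \<Omega>) \<in> f ` \<Omega>" using finZ neZ by simp
      ultimately obtain x where "(\<Sum>v\<in>\<Omega>. (a - f v) * (\<Sum>i\<le>?r. x i * f v ^ i)^2) < 0"
        using neg_witness[OF assms(1), where zz="Max (f ` \<Omega>)" and f=f and g="\<lambda>v. a - f v"] by auto
      with H show False by (meson not_le)
    qed
  next
    fix a assume "a \<in> {Max (f ` \<Omega>)..}"
    then have "f v \<le> a" if "v \<in> \<Omega>" for v using finZ that by (auto intro: order_trans[OF Max_ge])
    then show "a \<in> {a. psd_mat ?r (\<lambda>i j. a * hankel ?m i j - hankel_x ?m i j)}"
      unfolding e2 psd_mat_def quad_id by (auto intro!: sum_nonneg)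
  qed
  show ?thesis unfolding tau_l_def tau_u_def S1 S2 by simp
qed

end
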